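(* Let $\eta\in(0,1)$, $N_B\ge 0$, $N_{\rm coh}\ge 0$ and $r\in(0,1]$ be fixed, and for $\theta\in\mathbb{R}$ consider the single-mode Gaussian probe with first-moment vector $\mathbf{d}_S=\sqrt{2N_{\rm coh}}\,(\cos\theta,\sin\theta)^\top$ and covariance matrix $\boldsymbol{\Sigma}_S=\mathrm{diag}(r/2,\,1/(2r))$. Let $I^{\rm IF}_\eta(\theta)$ denote the quantum Fisher information of $\eta$ for the corresponding output state (defined in the context). Then $\theta\mapsto I^{\rm IF}_\eta(\theta)$ attains its maximum over $\mathbb{R}$ at $\theta=n\pi$ for every integer $n$.
   Context: Quadratures $\mathbf{R}=(q,p)^\top$ with $[R_i,R_j]=\mathrm{i}\Omega_{ij}$, $\boldsymbol\Omega=\begin{bmatrix}0&1\\-1&0\end{bmatrix}$; covariance matrix $\Sigma_{ij}=\tfrac12\langle R_iR_j+R_jR_i\rangle-\langle R_i\rangle\langle R_j\rangle$ (vacuum has $\boldsymbol\Sigma=\mathbb{I}_2/2$), first moments $d_i=\langle R_i\rangle$. The thermal lossy channel with transmission $\eta$ and thermal photon number $N_B$ (Heisenberg picture $a\mapsto \eta a+\sqrt{1-\eta^2}\,h$, $h$ thermal with $\langle h^\dagger h\rangle=N_B$) maps a Gaussian state with moments $(\mathbf d_S,\boldsymbol\Sigma_S)$ to the Gaussian state with $\tilde{\mathbf d}=\eta\mathbf d_S$ and $\tilde{\boldsymbol\Sigma}=\eta^2\boldsymbol\Sigma_S+y\,\mathbb{I}_2$, where $y=(1-\eta^2)(N_B+\tfrac12)$.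 The quantum Fisher information of $\eta$ for this single-mode Gaussian output is $I_\eta=\frac{\mathrm{Tr}\{(\tilde{\boldsymbol\Sigma}^{-1}\partial_\eta\tilde{\boldsymbol\Sigma})^2\}}{2(1+\mu^2)}+\frac{2(\partial_\eta\mu)^2}{1-\mu^4}+(\partial_\eta\tilde{\mathbf d})^\top\tilde{\boldsymbol\Sigma}^{-1}(\partial_\eta\tilde{\mathbf d})$, with purity $\mu=(4\det\tilde{\boldsymbol\Sigma})^{-1/2}$. *)

theory Defs
  imports "HOL-Analysis.Analysis"
begin

definition gauss_purity :: "real^2^2 \<Rightarrow> real" where
  "gauss_purity S = 1 / sqrt (4 * det S)"

definition gauss_qfi :: "(real \<Rightarrow> real^2) \<Rightarrow> (real \<Rightarrow> real^2^2) \<Rightarrow> real \<Rightarrow> real" where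
  "gauss_qfi d Sig eta =
     (let S = Sig eta;
          Si = matrix_inv S;
          dS = (\<chi> i j. deriv (\<lambda>t. Sig t $ i $ j) eta);
          dd = (\<chi> i. deriv (\<lambda>t. d t $ i) eta);
          mu = gauss_purity S;
          dmu = deriv (\<lambda>t. gauss_purity (Sig t)) eta
      in trace ((Si ** dS) ** (Si ** dS)) / (2 * (1 + mu^2))
         + 2 * dmu^2 / (1 - mu^4)
         + dd \<bullet> (Si *v dd))"

text \<open>Thermal lossy channel on first and second moments.\<close>

definition loss_d :: "real \<Rightarrow> real^2 \<Rightarrow> real^2" where
  "loss_d eta dS = eta *\<^sub>R dS"

definition loss_Sigma :: "real \<Rightarrow> real \<Rightarrow> real^2^2 \<Rightarrow> real^2^2" where
  "loss_Sigma NB eta SS = eta^2 *\<^sub>R SS + ((1 - eta^2) * (NB + 1/2)) *\<^sub>R mat 1"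

definition probe_d :: "real \<Rightarrow> real \<Rightarrow> real^2" where
  "probe_d Ncoh \<theta> = sqrt (2 * Ncoh) *\<^sub>R vector [cos \<theta>, sin \<theta>]"

definition probe_Sigma :: "real \<Rightarrow> real^2^2" where
  "probe_Sigma r = (\<chi> i j. if i = j then (vector [r/2, 1/(2*r)] :: real^2) $ i else 0)"

definition I_IF :: "real \<Rightarrow> real \<Rightarrow> real \<Rightarrow> real \<Rightarrow> real \<Rightarrow> real" where
  "I_IF NB Ncoh r eta \<theta> =
     gauss_qfi (\<lambda>t. loss_d t (probe_d Ncoh \<theta>)) (\<lambda>t. loss_Sigma NB t (probe_Sigma r)) eta"

end

theory Submission
  imports Defs
begin

lemma matrix_inv_eq:
  fixes A B :: "real^2^2"
  assumes "A ** B = mat 1" "B ** A = mat 1"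
  shows "matrix_inv A = B"
proof -
  have "\<exists>A'. A ** A' = mat 1 \<and> A' ** A = mat 1" using assms by blast
  then have h: "A ** matrix_inv A = mat 1 \<and> matrix_inv A ** A = mat 1"
    unfolding matrix_inv_def by (rule someI_ex)
  have "matrix_inv A = matrix_inv A ** (A ** B)" using assms by simp
  also have "\<dots> = (matrix_inv A ** A) ** B" by (simp add: matrix_mul_assoc)
  also have "\<dots> = B" using h by simp
  finally show ?thesis .
qed

lemma diag_inv:
  fixes a b :: real
  assumes "a \<noteq> 0" "b \<noteq> 0"
  shows "matrix_inv ((\<chi> i j. if i = j then (vector [a, b] :: real^2) $ i else 0) :: real^2^2)
       = (\<chi> i j. if i = j then (vector [1/a, 1/b] :: real^2) $ i else 0)"
  apply (rule matrix_inv_eq)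
  using assms by (auto simp: vec_eq_iff forall_2 matrix_matrix_mult_def sum_2 mat_def)

lemma main_term:
  fixes a b :: real and dd :: "real^2"
  shows "dd \<bullet> ((\<chi> i j. if i = j then (vector [1/a, 1/b] :: real^2) $ i else 0) *v dd)
     = (dd$1)^2 / a + (dd$2)^2 / b"
  by (simp add: inner_vec_def matrix_vector_mult_def sum_2 power2_eq_square)

theorem lemma1:
  fixes eta NB Ncoh r :: real
  assumes "0 < eta" "eta < 1" "NB \<ge> 0" "Ncoh \<ge> 0" "0 < r" "r \<le> 1"
  shows "\<forall>n::int. \<forall>\<theta>::real. I_IF NB Ncoh r eta \<theta> \<le> I_IF NB Ncoh r eta (of_int n * pi)"
proof (intro allI)
  fix n :: int and \<theta> :: real
  define y where "y = (1 - eta^2) * (NB + 1/2)"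
  define a where "a = eta^2 * (r/2) + y"
  define b where "b = eta^2 * (1/(2*r)) + y"
  have "eta^2 < 1" using assms by (simp add: power_less_one_iff)
  then have y0: "y > 0" unfolding y_def using assms by simp
  have a0: "a > 0" unfolding a_def using y0 assms by (simp add: add_pos_pos)
  have "r * r \<le> 1" using assms by (simp add: mult_le_one)
  then have rr: "r/2 \<le> 1/(2*r)" using assms by (simp add: field_simps)
  have ab: "a \<le> b" unfolding a_def b_def using mult_left_mono[OF rr, of "eta^2"] by simp
  have b0: "b > 0" using a0 ab by simp
  have S: "loss_Sigma NB eta (probe_Sigma r)
     = (\<chi> i j. if i = j then (vector [a, b] :: real^2) $ i else 0)"
    unfolding loss_Sigma_def probe_Sigma_def a_def b_def y_def
    by (simp add: vec_eq_iff forall_2 mat_def algebra_simps)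
  have dd: "(\<chi> i. deriv (\<lambda>t. loss_d t (probe_d Ncoh \<phi>) $ i) eta) = probe_d Ncoh \<phi>" for \<phi>
  proof -
    have "deriv (\<lambda>t. loss_d t (probe_d Ncoh \<phi>) $ i) eta = probe_d Ncoh \<phi> $ i" for i
    proof -
      have "((\<lambda>t. t * (probe_d Ncoh \<phi> $ i)) has_real_derivative probe_d Ncoh \<phi> $ i) (at eta)"
        by (auto intro!: derivative_eq_intros)
      then show ?thesis unfolding loss_d_def by (simp add: DERIV_imp_deriv)
    qed
    then show ?thesis by (simp add: vec_eq_iff)
  qed
  have key: "probe_d Ncoh \<phi> \<bullet> (matrix_inv (loss_Sigma NB eta (probe_Sigma r)) *v probe_d Ncoh \<phi>)
      = 2 * Ncoh * ((cos \<phi>)^2 / a + (sin \<phi>)^2 / b)" for \<phi>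
    unfolding S diag_inv[OF a0[THEN less_imp_neq, symmetric] b0[THEN less_imp_neq, symmetric]] main_term probe_d_def
    using assms(4) by (simp add: power_mult_distrib ring_distribs)
  have "2 * Ncoh * ((cos \<theta>)^2 / a + (sin \<theta>)^2 / b) \<le> 2 * Ncoh * ((cos \<theta>)^2 / a + (sin \<theta>)^2 / a)"
    using a0 ab assms by (intro mult_left_mono add_left_mono divide_left_mono) auto
  also have "\<dots> = 2 * Ncoh * (1 / a)" by (simp add: add_divide_distrib[symmetric])
  also have "\<dots> = 2 * Ncoh * ((cos (of_int n * pi))^2 / a + (sin (of_int n * pi))^2 / b)"
  proof -
    have s: "sin (of_int n * pi) = 0" by (simp add: sin_zero_iff_int2)
    have "(cos (of_int n * pi))^2 = 1" using sin_cos_squared_add[of "of_int n * pi"] s by simp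
    then show ?thesis using s by simp
  qed
  finally show "I_IF NB Ncoh r eta \<theta> \<le> I_IF NB Ncoh r eta (of_int n * pi)"
    unfolding I_IF_def gauss_qfi_def Let_def dd key by (rule add_left_mono)
qed

end
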